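(* Let $\mathbb{K}$ be a field, $m\ge 3$, $R=\mathbb{K}[T_1,\dots,T_m]$, and let $I=\langle T_1^{a_1},\dots,T_m^{a_m},T_1^{b_1}\cdots T_m^{b_m}\rangle\subset R$, where $0\le b_i<a_i$ for all $i$ and $b_i\neq 0$ for at least two indices $i$. Let $L\subset S=R[X_1,\dots,X_m,W]$ be the defining ideal of the Rees algebra of $I$. Then the set $\Gamma_0\cup\Gamma_1$, where $$\Gamma_0=\{\mathcal{P}(X_i,X_j)\mid 1\le j<i\le m+1\},\qquad \Gamma_1=\{\mathcal{P}(W^{|\mathbf{c}|},\mathbf{X}^{\mathbf{c}})\mid \mathbf{0}\neq \mathbf{c}\in\mathbb{N}^m\},$$ is an (infinite) Gröbner basis of $L$ with respect to the monomial order $\tau$.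
   Context: Write $\mathbf{T}^{\mathbf{b}}=T_1^{b_1}\cdots T_m^{b_m}$. Let $\Phi:S\to R[Z]$ be the $R$-algebra homomorphism with $X_i\mapsto T_i^{a_i}Z$ ($1\le i\le m$) and $W\mapsto \mathbf{T}^{\mathbf{b}}Z$; its image is the Rees algebra $\mathcal{R}(I)=\bigoplus_{k\ge0}I^kZ^k$ and $L=\ker\Phi$. Set $X_{m+1}:=W$. For $\mathbf{c}\in\mathbb{N}^m$, $\mathbf{X}^{\mathbf{c}}=X_1^{c_1}\cdots X_m^{c_m}$ and $|\mathbf{c}|=\sum c_i$. Let $\Psi:S\to R$ be the $R$-algebra map with $X_i\mapsto T_i^{a_i}$, $W\mapsto\mathbf{T}^{\mathbf{b}}$. For monomials $M,N$ in $X_1,\dots,X_m,W$ (of the same degree), put $g=\gcd(\Psi(M),\Psi(N))$ and $\mathcal{P}(M,N):=\frac{\Psi(N)}{g}M-\frac{\Psi(M)}{g}N\in L$. The order $\tau$ is the lexicographic order on $S$ with $W>X_m>X_{m-1}>\cdots>X_1>T_1>\cdots>T_m$. *)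

theory Defs
  imports Main "HOL-Library.Poly_Mapping"
begin

text \<open>Variables of the big polynomial ring: T i (i = 1..m), X i (i = 1..m+1, with
  X (m+1) playing the role of W), and the auxiliary Rees variable Z.\<close>
datatype var = T nat | X nat | Z

type_synonym monom = "var \<Rightarrow>\<^sub>0 nat"
type_synonym 'k mpoly = "monom \<Rightarrow>\<^sub>0 'k"

definition Var :: "var \<Rightarrow> 'k::comm_ring_1 mpoly" where
  "Var v = Poly_Mapping.single (Poly_Mapping.single v 1) 1"

definition Mono :: "monom \<Rightarrow> 'k::comm_ring_1 mpoly" where
  "Mono e = Poly_Mapping.single e 1"

definition Const :: "'k::comm_ring_1 \<Rightarrow> 'k mpoly" where
  "Const c = Poly_Mapping.single 0 c"

definition subst :: "(var \<Rightarrow> 'k::comm_ring_1 mpoly) \<Rightarrow> 'k mpoly \<Rightarrow> 'k mpoly" where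
  "subst \<sigma> p = (\<Sum>mu\<in>Poly_Mapping.keys p. Const (Poly_Mapping.lookup p mu) * (\<Prod>v\<in>Poly_Mapping.keys (mu::monom). \<sigma> v ^ (Poly_Mapping.lookup mu v)))"

definition Svars :: "nat \<Rightarrow> var set" where
  "Svars m = {T i | i. 1 \<le> i \<and> i \<le> m} \<union> {X i | i. 1 \<le> i \<and> i \<le> m + 1}"

definition in_S :: "nat \<Rightarrow> 'k::comm_ring_1 mpoly \<Rightarrow> bool" where
  "in_S m p \<longleftrightarrow> (\<forall>t\<in>Poly_Mapping.keys p. Poly_Mapping.keys t \<subseteq> Svars m)"

definition Tb :: "nat \<Rightarrow> (nat \<Rightarrow> nat) \<Rightarrow> 'k::comm_ring_1 mpoly" where
  "Tb m b = (\<Prod>i=1..m. Var (T i) ^ b i)"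

definition Phi_img :: "nat \<Rightarrow> (nat \<Rightarrow> nat) \<Rightarrow> (nat \<Rightarrow> nat) \<Rightarrow> var \<Rightarrow> 'k::comm_ring_1 mpoly" where
  "Phi_img m a b v = (case v of
       T i \<Rightarrow> Var (T i)
     | X i \<Rightarrow> (if i \<le> m then Var (T i) ^ a i * Var Z else Tb m b * Var Z)
     | Z \<Rightarrow> Var Z)"

definition Phi :: "nat \<Rightarrow> (nat \<Rightarrow> nat) \<Rightarrow> (nat \<Rightarrow> nat) \<Rightarrow> 'k::comm_ring_1 mpoly \<Rightarrow> 'k mpoly" where
  "Phi m a b = subst (Phi_img m a b)"

definition reesL :: "nat \<Rightarrow> (nat \<Rightarrow> nat) \<Rightarrow> (nat \<Rightarrow> nat) \<Rightarrow> 'k::comm_ring_1 mpoly set" where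
  "reesL m a b = {p. in_S m p \<and> Phi m a b p = 0}"

definition psi_exp :: "nat \<Rightarrow> (nat \<Rightarrow> nat) \<Rightarrow> (nat \<Rightarrow> nat) \<Rightarrow> monom \<Rightarrow> monom" where
  "psi_exp m a b M =
     (\<Sum>i=1..m. Poly_Mapping.single (T i) (a i * Poly_Mapping.lookup M (X i) + b i * Poly_Mapping.lookup M (X (m+1))))"

text \<open>Exponent of Psi(N)/gcd(Psi(M),Psi(N)); since exponents are in T_1..T_m,
  e_N - min(e_N,e_M) = e_N - e_M (truncated) componentwise.\<close>
definition quot_exp :: "nat \<Rightarrow> monom \<Rightarrow> monom \<Rightarrow> monom" where
  "quot_exp m eN eM = (\<Sum>i=1..m. Poly_Mapping.single (T i) (Poly_Mapping.lookup eN (T i) - Poly_Mapping.lookup eM (T i)))"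

definition Pbin :: "nat \<Rightarrow> (nat \<Rightarrow> nat) \<Rightarrow> (nat \<Rightarrow> nat) \<Rightarrow> monom \<Rightarrow> monom \<Rightarrow> 'k::comm_ring_1 mpoly" where
  "Pbin m a b M N =
     Mono (quot_exp m (psi_exp m a b N) (psi_exp m a b M)) * Mono M
   - Mono (quot_exp m (psi_exp m a b M) (psi_exp m a b N)) * Mono N"

definition Xexp :: "nat \<Rightarrow> (nat \<Rightarrow> nat) \<Rightarrow> monom" where
  "Xexp m c = (\<Sum>i=1..m. Poly_Mapping.single (X i) (c i))"

definition Gamma0 :: "nat \<Rightarrow> (nat \<Rightarrow> nat) \<Rightarrow> (nat \<Rightarrow> nat) \<Rightarrow> 'k::comm_ring_1 mpoly set" where
  "Gamma0 m a b = {Pbin m a b (Poly_Mapping.single (X i) 1) (Poly_Mapping.single (X j) 1)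
                    | i j. 1 \<le> j \<and> j < i \<and> i \<le> m + 1}"

definition Gamma1 :: "nat \<Rightarrow> (nat \<Rightarrow> nat) \<Rightarrow> (nat \<Rightarrow> nat) \<Rightarrow> 'k::comm_ring_1 mpoly set" where
  "Gamma1 m a b = {Pbin m a b (Poly_Mapping.single (X (m+1)) (\<Sum>i=1..m. c i)) (Xexp m c)
                    | c. (\<exists>i\<in>{1..m}. c i \<noteq> 0)}"

fun var_gt :: "var \<Rightarrow> var \<Rightarrow> bool" where
  "var_gt (X i) (X j) = (i > j)"
| "var_gt (X i) (T j) = True"
| "var_gt (X i) Z = True"
| "var_gt (T i) (T j) = (i < j)"
| "var_gt (T i) Z = True"
| "var_gt _ _ = False"

definition lex_less :: "monom \<Rightarrow> monom \<Rightarrow> bool" where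
  "lex_less s t \<longleftrightarrow> (\<exists>v. Poly_Mapping.lookup s v < Poly_Mapping.lookup t v \<and> (\<forall>u. var_gt u v \<longrightarrow> Poly_Mapping.lookup s u = Poly_Mapping.lookup t u))"

definition lead_mon :: "'k::zero mpoly \<Rightarrow> monom" where
  "lead_mon p = (THE t. t \<in> Poly_Mapping.keys p \<and> (\<forall>s\<in>Poly_Mapping.keys p. s \<noteq> t \<longrightarrow> lex_less s t))"

definition mon_dvd :: "monom \<Rightarrow> monom \<Rightarrow> bool" where
  "mon_dvd s t \<longleftrightarrow> (\<forall>v. Poly_Mapping.lookup s v \<le> Poly_Mapping.lookup t v)"

definition is_groebner_basis :: "'k::zero mpoly set \<Rightarrow> 'k mpoly set \<Rightarrow> bool" where
  "is_groebner_basis G I \<longleftrightarrow> G \<subseteq> I \<and>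
     (\<forall>f\<in>I. f \<noteq> 0 \<longrightarrow> (\<exists>g\<in>G. g \<noteq> 0 \<and> mon_dvd (lead_mon g) (lead_mon f)))"

end

theory Submission
  imports Defs
begin


lemma Mono_mult: "Mono s * Mono t = (Mono (s + t) :: 'k::comm_ring_1 mpoly)"
  by (simp add: Mono_def mult_single)

lemma Mono_zero: "Mono 0 = (1 :: 'k::comm_ring_1 mpoly)"
  by (simp add: Mono_def)

definition rep :: "nat \<Rightarrow> monom \<Rightarrow> monom" where
  "rep n e = (\<Sum>_\<in>{..<n}. e)"

lemma lookup_rep [simp]: "Poly_Mapping.lookup (rep n e) v = n * Poly_Mapping.lookup e v"
  by (simp add: rep_def lookup_sum)

lemma Mono_pow: "Mono e ^ n = (Mono (rep n e) :: 'k::comm_ring_1 mpoly)"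
  by (induction n) (simp_all add: rep_def Mono_zero Mono_mult add.commute)

lemma Mono_prod: "finite A \<Longrightarrow> (\<Prod>v\<in>A. Mono (f v)) = (Mono (\<Sum>v\<in>A. f v) :: 'k::comm_ring_1 mpoly)"
  by (induction rule: finite_induct) (simp_all add: Mono_zero Mono_mult)

lemma rep_single: "rep n (Poly_Mapping.single k c) = Poly_Mapping.single k (n * c)"
  by (rule poly_mapping_eqI) (simp add: lookup_single when_def)

lemma Var_pow: "Var v ^ n = (Mono (Poly_Mapping.single v n) :: 'k::comm_ring_1 mpoly)"
  by (simp add: Var_def Mono_def[symmetric] Mono_pow rep_single)

lemma Var_Mono: "Var v = (Mono (Poly_Mapping.single v 1) :: 'k::comm_ring_1 mpoly)"
  by (simp add: Var_def Mono_def)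

definition img :: "nat \<Rightarrow> (nat \<Rightarrow> nat) \<Rightarrow> (nat \<Rightarrow> nat) \<Rightarrow> var \<Rightarrow> monom" where
  "img m a b v = (case v of
       T i \<Rightarrow> Poly_Mapping.single (T i) 1
     | X i \<Rightarrow> (if i \<le> m then Poly_Mapping.single (T i) (a i) + Poly_Mapping.single Z 1
               else (\<Sum>i=1..m. Poly_Mapping.single (T i) (b i)) + Poly_Mapping.single Z 1)
     | Z \<Rightarrow> Poly_Mapping.single Z 1)"

lemma Tb_Mono: "Tb m b = (Mono (\<Sum>i=1..m. Poly_Mapping.single (T i) (b i)) :: 'k::comm_ring_1 mpoly)"
  by (simp add: Tb_def Var_pow Mono_prod)

lemma Phi_img_Mono: "Phi_img m a b v = (Mono (img m a b v) :: 'k::comm_ring_1 mpoly)"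
proof (cases v)
  case (T i) then show ?thesis by (simp add: Phi_img_def img_def Var_def Mono_def)
next
  case (X i) then show ?thesis
    by (simp add: Phi_img_def img_def Var_pow Tb_Mono Mono_mult Var_Mono Mono_pow rep_single)
next
  case Z then show ?thesis by (simp add: Phi_img_def img_def Var_def Mono_def)
qed

definition phi :: "nat \<Rightarrow> (nat \<Rightarrow> nat) \<Rightarrow> (nat \<Rightarrow> nat) \<Rightarrow> monom \<Rightarrow> monom" where
  "phi m a b t = (\<Sum>v\<in>Poly_Mapping.keys t. rep (Poly_Mapping.lookup t v) (img m a b v))"

lemma Phi_eq: "Phi m a b p = (\<Sum>mu\<in>Poly_Mapping.keys p. Poly_Mapping.single (phi m a b mu) (Poly_Mapping.lookup p mu) :: 'k::comm_ring_1 mpoly)"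
proof -
  have "Const c * Mono e = (Poly_Mapping.single e c :: 'k mpoly)" for c e
    by (simp add: Const_def Mono_def mult_single)
  then show ?thesis
  unfolding Phi_def subst_def
  by (simp add: Phi_img_Mono Mono_pow Mono_prod phi_def)
qed

lemma finite_Svars: "finite (Svars m)"
  unfolding Svars_def by auto

lemma Svars_eq: "Svars m = T ` {1..m} \<union> X ` {1..m+1}"
  unfolding Svars_def by auto

lemma phi_lookup:
  assumes "Poly_Mapping.keys t \<subseteq> Svars m"
  shows "Poly_Mapping.lookup (phi m a b t) w =
    (\<Sum>j=1..m. Poly_Mapping.lookup t (T j) * Poly_Mapping.lookup (img m a b (T j)) w)
  + (\<Sum>j=1..m+1. Poly_Mapping.lookup t (X j) * Poly_Mapping.lookup (img m a b (X j)) w)"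
proof -
  have "Poly_Mapping.lookup (phi m a b t) w = (\<Sum>v\<in>Poly_Mapping.keys t. Poly_Mapping.lookup t v * Poly_Mapping.lookup (img m a b v) w)"
    by (simp add: phi_def lookup_sum)
  also have "\<dots> = (\<Sum>v\<in>Svars m. Poly_Mapping.lookup t v * Poly_Mapping.lookup (img m a b v) w)"
    by (rule sum.mono_neutral_left) (use assms finite_Svars in \<open>auto simp: in_keys_iff\<close>)
  also have "\<dots> = (\<Sum>v\<in>T ` {1..m}. Poly_Mapping.lookup t v * Poly_Mapping.lookup (img m a b v) w)
     + (\<Sum>v\<in>X ` {1..m+1}. Poly_Mapping.lookup t v * Poly_Mapping.lookup (img m a b v) w)"
    unfolding Svars_eq by (rule sum.union_disjoint) auto
  also have "\<dots> = (\<Sum>j=1..m. Poly_Mapping.lookup t (T j) * Poly_Mapping.lookup (img m a b (T j)) w)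
  + (\<Sum>j=1..m+1. Poly_Mapping.lookup t (X j) * Poly_Mapping.lookup (img m a b (X j)) w)"
    by (simp add: sum.reindex inj_on_def)
  finally show ?thesis .
qed

lemma lookup_sumT: "finite A \<Longrightarrow> Poly_Mapping.lookup (\<Sum>i\<in>A. Poly_Mapping.single (T i) (f i)) w =
   (case w of T i \<Rightarrow> if i \<in> A then f i else 0 | _ \<Rightarrow> 0)"
  by (cases w) (auto simp: lookup_sum lookup_single when_def)

lemma lookup_sumX: "finite A \<Longrightarrow> Poly_Mapping.lookup (\<Sum>i\<in>A. Poly_Mapping.single (X i) (f i)) w =
   (case w of X i \<Rightarrow> if i \<in> A then f i else 0 | _ \<Rightarrow> 0)"
  by (cases w) (auto simp: lookup_sum lookup_single when_def)

lemma sum_mult_delta: "finite A \<Longrightarrow> (\<Sum>j\<in>A. (f j::nat) * (if j = i then g j else 0)) = (if i \<in> A then f i * g i else 0)"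
  by (simp add: if_distrib[of "\<lambda>x. f _ * x"] sum.delta' cong: if_cong)

lemma sum_mult_delta1: "finite A \<Longrightarrow> (\<Sum>j\<in>A. (f j::nat) * (if j = i then Suc 0 else 0)) = (if i \<in> A then f i else 0)"
  using sum_mult_delta[of A f i "\<lambda>_. Suc 0"] by simp

lemma phi_T:
  assumes "Poly_Mapping.keys t \<subseteq> Svars m" "1 \<le> i" "i \<le> m"
  shows "Poly_Mapping.lookup (phi m a b t) (T i) = Poly_Mapping.lookup t (T i)
     + a i * Poly_Mapping.lookup t (X i) + b i * Poly_Mapping.lookup t (X (m+1))"
proof -
  have "(\<Sum>j=1..m+1. Poly_Mapping.lookup t (X j) * Poly_Mapping.lookup (img m a b (X j)) (T i))
     = (\<Sum>j=1..m. Poly_Mapping.lookup t (X j) * Poly_Mapping.lookup (img m a b (X j)) (T i))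
       + Poly_Mapping.lookup t (X (m+1)) * Poly_Mapping.lookup (img m a b (X (m+1))) (T i)"
    by simp
  also have "\<dots> = a i * Poly_Mapping.lookup t (X i) + b i * Poly_Mapping.lookup t (X (m+1))"
    using assms(2,3) by (simp add: img_def lookup_add lookup_sumT lookup_single when_def sum_mult_delta)
  moreover have "(\<Sum>j=1..m. Poly_Mapping.lookup t (T j) * Poly_Mapping.lookup (img m a b (T j)) (T i)) = Poly_Mapping.lookup t (T i)"
    using assms(2,3) by (simp add: img_def lookup_single when_def sum_mult_delta1)
  ultimately show ?thesis using assms
    by (simp add: phi_lookup)
qed

lemma phi_Z:
  assumes "Poly_Mapping.keys t \<subseteq> Svars m"
  shows "Poly_Mapping.lookup (phi m a b t) Z = (\<Sum>j=1..m+1. Poly_Mapping.lookup t (X j))"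
  using assms by (simp add: phi_lookup img_def lookup_add lookup_sumT lookup_single when_def sum_mult_delta)

lemma phi_other:
  assumes "Poly_Mapping.keys t \<subseteq> Svars m" "\<And>i. 1 \<le> i \<Longrightarrow> i \<le> m \<Longrightarrow> w \<noteq> T i" "w \<noteq> Z"
  shows "Poly_Mapping.lookup (phi m a b t) w = 0"
  using assms by (cases w) (auto simp: phi_lookup img_def lookup_add lookup_sumT lookup_single when_def sum_mult_delta)



lemma var_gt_irrefl: "\<not> var_gt v v"
  by (cases v) auto

lemma var_gt_trans: "var_gt u v \<Longrightarrow> var_gt v w \<Longrightarrow> var_gt u w"
  by (cases u; cases v; cases w) auto

lemma var_gt_total: "u \<noteq> v \<Longrightarrow> var_gt u v \<or> var_gt v u"
  by (cases u; cases v) auto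

lemma var_gt_asym: "var_gt u v \<Longrightarrow> \<not> var_gt v u"
  using var_gt_trans var_gt_irrefl by blast

lemma var_max: "finite D \<Longrightarrow> D \<noteq> {} \<Longrightarrow> \<exists>v\<in>D. \<forall>u\<in>D. u \<noteq> v \<longrightarrow> var_gt v u"
proof (induction rule: finite_ne_induct)
  case (singleton x) then show ?case by auto
next
  case (insert x F)
  then obtain v where v: "v \<in> F" "\<forall>u\<in>F. u \<noteq> v \<longrightarrow> var_gt v u" by blast
  show ?case
  proof (cases "var_gt x v")
    case True
    have "\<forall>u\<in>insert x F. u \<noteq> x \<longrightarrow> var_gt x u"
    proof (intro ballI impI)
      fix u assume "u \<in> insert x F" "u \<noteq> x"
      then have "u \<in> F" by simp
      show "var_gt x u"
      proof (cases "u = v")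
        case True then show ?thesis using \<open>var_gt x v\<close> by simp
      next
        case False then show ?thesis using v(2) \<open>u \<in> F\<close> True var_gt_trans by blast
      qed
    qed
    then show ?thesis by blast
  next
    case False
    then have "x = v \<or> var_gt v x" using var_gt_total by blast
    then show ?thesis using v insert by auto
  qed
qed

lemma lex_less_asym: "lex_less s t \<Longrightarrow> \<not> lex_less t s"
  unfolding lex_less_def
proof (elim exE conjE)
  fix v w
  assume 1: "Poly_Mapping.lookup s v < Poly_Mapping.lookup t v" "\<forall>u. var_gt u v \<longrightarrow> Poly_Mapping.lookup s u = Poly_Mapping.lookup t u"
  show "\<not> (\<exists>v. Poly_Mapping.lookup t v < Poly_Mapping.lookup s v \<and> (\<forall>u. var_gt u v \<longrightarrow> Poly_Mapping.lookup t u = Poly_Mapping.lookup s u))"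
  proof
    assume "\<exists>v. Poly_Mapping.lookup t v < Poly_Mapping.lookup s v \<and> (\<forall>u. var_gt u v \<longrightarrow> Poly_Mapping.lookup t u = Poly_Mapping.lookup s u)"
    then obtain w where 2: "Poly_Mapping.lookup t w < Poly_Mapping.lookup s w" "\<forall>u. var_gt u w \<longrightarrow> Poly_Mapping.lookup t u = Poly_Mapping.lookup s u" by blast
    show False
    proof (cases "v = w")
      case True then show ?thesis using 1 2 by simp
    next
      case False
      then have "var_gt v w \<or> var_gt w v" by (rule var_gt_total)
      then show ?thesis
      proof
        assume "var_gt v w"
        then have "Poly_Mapping.lookup t v = Poly_Mapping.lookup s v" using 2(2) by blast
        then show False using 1(1) by simp
      next
        assume "var_gt w v"
        then have "Poly_Mapping.lookup s w = Poly_Mapping.lookup t w" using 1(2) by blast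
        then show False using 2(1) by simp
      qed
    qed
  qed
qed

lemma lex_less_irrefl: "\<not> lex_less s s"
  unfolding lex_less_def by auto

lemma lex_less_trans: "lex_less s t \<Longrightarrow> lex_less t r \<Longrightarrow> lex_less s r"
  unfolding lex_less_def
proof (elim exE conjE)
  fix v w
  assume 1: "Poly_Mapping.lookup s v < Poly_Mapping.lookup t v" "\<forall>u. var_gt u v \<longrightarrow> Poly_Mapping.lookup s u = Poly_Mapping.lookup t u"
     and 2: "Poly_Mapping.lookup t w < Poly_Mapping.lookup r w" "\<forall>u. var_gt u w \<longrightarrow> Poly_Mapping.lookup t u = Poly_Mapping.lookup r u"
  show "\<exists>v. Poly_Mapping.lookup s v < Poly_Mapping.lookup r v \<and> (\<forall>u. var_gt u v \<longrightarrow> Poly_Mapping.lookup s u = Poly_Mapping.lookup r u)"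
  proof (cases "v = w")
    case True then show ?thesis using 1 2 by (metis order.strict_trans)
  next
    case False
    then consider "var_gt v w" | "var_gt w v" using var_gt_total by blast
    then show ?thesis
    proof cases
      case 3: 1
      show ?thesis
        by (rule exI[of _ v]) (metis 1 2 3 var_gt_trans)
    next
      case 3: 2
      show ?thesis
        by (rule exI[of _ w]) (metis 1 2 3 var_gt_trans)
    qed
  qed
qed

lemma lex_less_total: "s \<noteq> t \<Longrightarrow> lex_less s t \<or> lex_less t s"
proof -
  assume "s \<noteq> t"
  let ?D = "{v. Poly_Mapping.lookup s v \<noteq> Poly_Mapping.lookup t v}"
  have fin: "finite ?D"
    by (rule finite_subset[of _ "Poly_Mapping.keys s \<union> Poly_Mapping.keys t"]) (auto simp: in_keys_iff)
  have ne: "?D \<noteq> {}" using \<open>s \<noteq> t\<close> poly_mapping_eqI by (metis (mono_tags, lifting) empty_Collect_eq)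
  obtain v where v: "v \<in> ?D" "\<forall>u\<in>?D. u \<noteq> v \<longrightarrow> var_gt v u" using var_max[OF fin ne] by blast
  have above: "\<forall>u. var_gt u v \<longrightarrow> Poly_Mapping.lookup s u = Poly_Mapping.lookup t u"
  proof (intro allI impI)
    fix u assume "var_gt u v"
    then have "u \<noteq> v" "\<not> var_gt v u" using var_gt_asym var_gt_irrefl by auto
    then show "Poly_Mapping.lookup s u = Poly_Mapping.lookup t u" using v(2) by auto
  qed
  show ?thesis
  proof (cases "Poly_Mapping.lookup s v < Poly_Mapping.lookup t v")
    case True then show ?thesis using above unfolding lex_less_def by blast
  next
    case False
    then have "Poly_Mapping.lookup t v < Poly_Mapping.lookup s v" using v(1) by auto
    then show ?thesis using above unfolding lex_less_def by metis
  qed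
qed

lemma lex_max: "finite K \<Longrightarrow> K \<noteq> {} \<Longrightarrow> \<exists>u\<in>K. \<forall>s\<in>K. s \<noteq> u \<longrightarrow> lex_less s u"
proof (induction rule: finite_ne_induct)
  case (singleton x) then show ?case by auto
next
  case (insert x F)
  then obtain v where v: "v \<in> F" "\<forall>u\<in>F. u \<noteq> v \<longrightarrow> lex_less u v" by blast
  show ?case
  proof (cases "lex_less v x")
    case True
    have "\<forall>u\<in>insert x F. u \<noteq> x \<longrightarrow> lex_less u x"
    proof (intro ballI impI)
      fix u assume "u \<in> insert x F" "u \<noteq> x"
      then have "u \<in> F" by simp
      show "lex_less u x"
      proof (cases "u = v")
        case True then show ?thesis using \<open>lex_less v x\<close> by simp
      next
        case False then show ?thesis using v(2) \<open>u \<in> F\<close> True lex_less_trans by blast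
      qed
    qed
    then show ?thesis by blast
  next
    case False
    then have "x = v \<or> lex_less x v" using lex_less_total by blast
    then show ?thesis using v insert by auto
  qed
qed

lemma lead_monI:
  assumes "u \<in> Poly_Mapping.keys p" "\<forall>s\<in>Poly_Mapping.keys p. s \<noteq> u \<longrightarrow> lex_less s u"
  shows "lead_mon p = u"
  unfolding lead_mon_def
proof (rule the_equality)
  show "u \<in> Poly_Mapping.keys p \<and> (\<forall>s\<in>Poly_Mapping.keys p. s \<noteq> u \<longrightarrow> lex_less s u)" using assms by blast
next
  fix t assume t: "t \<in> Poly_Mapping.keys p \<and> (\<forall>s\<in>Poly_Mapping.keys p. s \<noteq> t \<longrightarrow> lex_less s t)"
  show "t = u"
  proof (rule ccontr)
    assume "t \<noteq> u"
    then have "lex_less u t" "lex_less t u" using t assms by auto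
    then show False using lex_less_asym by blast
  qed
qed

lemma binom_lead:
  assumes "x \<noteq> y" "lex_less y x"
  shows "(Poly_Mapping.single x 1 - Poly_Mapping.single y 1 :: 'k::field mpoly) \<noteq> 0"
    and "lead_mon (Poly_Mapping.single x 1 - Poly_Mapping.single y 1 :: 'k::field mpoly) = x"
proof -
  let ?p = "Poly_Mapping.single x 1 - Poly_Mapping.single y 1 :: 'k::field mpoly"
  have kx: "Poly_Mapping.lookup ?p x = 1" using assms(1) by (simp add: lookup_minus lookup_single)
  have ky: "Poly_Mapping.lookup ?p y = -1" using assms(1) by (simp add: lookup_minus lookup_single)
  have keys: "Poly_Mapping.keys ?p = {x, y}"
    using kx ky by (auto simp: in_keys_iff lookup_minus lookup_single when_def split: if_splits)
  show "?p \<noteq> 0" using kx by auto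
  show "lead_mon ?p = x"
    by (rule lead_monI) (use keys assms in auto)
qed



lemma binom_lookups:
  assumes "x \<noteq> y"
  shows "Poly_Mapping.lookup (Poly_Mapping.single x 1 - Poly_Mapping.single y 1 :: 'k::field mpoly) x = 1"
    "Poly_Mapping.lookup (Poly_Mapping.single x 1 - Poly_Mapping.single y 1 :: 'k::field mpoly) y = -1"
    "Poly_Mapping.keys (Poly_Mapping.single x 1 - Poly_Mapping.single y 1 :: 'k::field mpoly) = {x, y}"
  using assms by (auto simp: in_keys_iff lookup_minus lookup_single when_def split: if_splits)

lemma Pbin_eq: "Pbin m a b M N =
  Poly_Mapping.single (quot_exp m (psi_exp m a b N) (psi_exp m a b M) + M) 1
  - Poly_Mapping.single (quot_exp m (psi_exp m a b M) (psi_exp m a b N) + N) (1 :: 'k::comm_ring_1)"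
  by (simp add: Pbin_def Mono_mult) (simp add: Mono_def)

lemma lookup_psi: "Poly_Mapping.lookup (psi_exp m a b M) w = (case w of T l \<Rightarrow> if l \<in> {1..m} then
   a l * Poly_Mapping.lookup M (X l) + b l * Poly_Mapping.lookup M (X (m+1)) else 0 | _ \<Rightarrow> 0)"
  unfolding psi_exp_def by (simp only: lookup_sumT finite_atLeastAtMost)

lemma lookup_quot: "Poly_Mapping.lookup (quot_exp m e f) w = (case w of T l \<Rightarrow> if l \<in> {1..m} then
   Poly_Mapping.lookup e (T l) - Poly_Mapping.lookup f (T l) else 0 | _ \<Rightarrow> 0)"
  unfolding quot_exp_def by (simp only: lookup_sumT finite_atLeastAtMost)

lemma keys_quot: "Poly_Mapping.keys (quot_exp m e f) \<subseteq> Svars m"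
  by (auto simp: in_keys_iff lookup_quot Svars_def split: var.splits if_splits)

lemma keys_plus_sub: "Poly_Mapping.keys (p + q) \<subseteq> Poly_Mapping.keys p \<union> Poly_Mapping.keys (q::monom)"
  by (rule keys_add)

lemma Pbin_in_L:
  assumes KM: "Poly_Mapping.keys M \<subseteq> X ` {1..m+1}" and KN: "Poly_Mapping.keys N \<subseteq> X ` {1..m+1}"
    and deg: "(\<Sum>j=1..m+1. Poly_Mapping.lookup M (X j)) = (\<Sum>j=1..m+1. Poly_Mapping.lookup N (X j))"
  shows "(Pbin m a b M N :: 'k::field mpoly) \<in> reesL m a b"
proof -
  define x where "x = quot_exp m (psi_exp m a b N) (psi_exp m a b M) + M"
  define y where "y = quot_exp m (psi_exp m a b M) (psi_exp m a b N) + N"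
  have XS: "X ` {1..m+1} \<subseteq> Svars m" unfolding Svars_def by auto
  have kx: "Poly_Mapping.keys x \<subseteq> Svars m"
    unfolding x_def using keys_plus_sub keys_quot KM XS by blast
  have ky: "Poly_Mapping.keys y \<subseteq> Svars m"
    unfolding y_def using keys_plus_sub keys_quot KN XS by blast
  have M0: "Poly_Mapping.lookup M (T i) = 0" for i using KM by (auto simp: in_keys_iff)
  have N0: "Poly_Mapping.lookup N (T i) = 0" for i using KN by (auto simp: in_keys_iff)
  have phixy: "phi m a b x = phi m a b y"
  proof (rule poly_mapping_eqI)
    fix w
    show "Poly_Mapping.lookup (phi m a b x) w = Poly_Mapping.lookup (phi m a b y) w"
    proof (cases "w = Z")
      case True
      then show ?thesis using kx ky deg
        by (simp add: phi_Z x_def y_def lookup_add lookup_quot)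
    next
      case False
      show ?thesis
      proof (cases "\<exists>i. 1 \<le> i \<and> i \<le> m \<and> w = T i")
        case True
        then obtain i where i: "1 \<le> i" "i \<le> m" "w = T i" by blast
        show ?thesis using i kx ky
          by (simp add: phi_T x_def y_def lookup_add lookup_quot lookup_psi M0 N0)
      next
        case False
        then show ?thesis using kx ky \<open>w \<noteq> Z\<close> phi_other by metis
      qed
    qed
  qed
  have P: "Pbin m a b M N = Poly_Mapping.single x 1 - (Poly_Mapping.single y 1 :: 'k mpoly)"
    unfolding x_def y_def by (rule Pbin_eq)
  have "Poly_Mapping.keys (Poly_Mapping.single x 1 - (Poly_Mapping.single y 1 :: 'k mpoly)) \<subseteq> {x, y}"
    by (auto simp: in_keys_iff lookup_minus lookup_single when_def split: if_splits)
  then have inS: "in_S m (Pbin m a b M N :: 'k mpoly)"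
    unfolding in_S_def P using kx ky by blast
  have "Phi m a b (Pbin m a b M N :: 'k mpoly) = 0"
  proof (cases "x = y")
    case True then show ?thesis by (simp add: P Phi_eq)
  next
    case False
    then show ?thesis
      by (simp add: P Phi_eq binom_lookups phixy single_uminus)
  qed
  then show ?thesis using inS unfolding reesL_def by blast
qed



lemma split_sum: fixes n \<delta> :: nat and e :: "nat \<Rightarrow> nat" shows "\<delta> \<le> (\<Sum>j=1..n. e j) \<Longrightarrow> \<exists>c. (\<forall>j. c j \<le> e j) \<and> (\<Sum>j=1..n. c j) = (\<delta>::nat)"
proof (induction n arbitrary: \<delta>)
  case 0
  then show ?case by (intro exI[of _ "\<lambda>_. 0"]) simp
next
  case (Suc n)
  define d where "d = min \<delta> (e (Suc n))"
  have "\<delta> - d \<le> (\<Sum>j=1..n. e j)" using Suc.prems by (simp add: d_def)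
  then obtain c0 where c0: "\<forall>j. c0 j \<le> e j" "(\<Sum>j=1..n. c0 j) = \<delta> - d" using Suc.IH by blast
  define c where "c = c0(Suc n := d)"
  have "(\<Sum>j=1..n. c j) = (\<Sum>j=1..n. c0 j)" unfolding c_def by (rule sum.cong) auto
  then have "(\<Sum>j=1..Suc n. c j) = \<delta>" using c0(2) by (simp add: c_def d_def)
  moreover have "\<forall>j. c j \<le> e j" using c0(1) by (simp add: c_def d_def)
  ultimately show ?case by blast
qed

lemma deg_single: "1 \<le> i \<Longrightarrow> i \<le> m + 1 \<Longrightarrow> (\<Sum>k=1..m+1. Poly_Mapping.lookup (Poly_Mapping.single (X i) n) (X k)) = n"
  by (simp add: lookup_single when_def)

lemma Gamma0_sub: "Gamma0 m a b \<subseteq> (reesL m a b :: 'k::field mpoly set)"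
proof
  fix g :: "'k mpoly" assume "g \<in> Gamma0 m a b"
  then obtain i j where ij: "g = Pbin m a b (Poly_Mapping.single (X i) 1) (Poly_Mapping.single (X j) 1)"
    "1 \<le> j" "j < i" "i \<le> m + 1" unfolding Gamma0_def by blast
  have k1: "Poly_Mapping.keys (Poly_Mapping.single (X i) (1::nat)) \<subseteq> X ` {1..m+1}" using ij by auto
  have k2: "Poly_Mapping.keys (Poly_Mapping.single (X j) (1::nat)) \<subseteq> X ` {1..m+1}" using ij by auto
  have d1: "(\<Sum>k=1..m+1. Poly_Mapping.lookup (Poly_Mapping.single (X i) 1) (X k)) = (1::nat)"
    using ij by (intro deg_single) auto
  have d2: "(\<Sum>k=1..m+1. Poly_Mapping.lookup (Poly_Mapping.single (X j) 1) (X k)) = (1::nat)"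
    using ij by (intro deg_single) auto
  show "g \<in> reesL m a b" unfolding ij(1)
    by (rule Pbin_in_L[OF k1 k2 trans[OF d1 d2[symmetric]]])
qed

lemma lookup_Xexp: "Poly_Mapping.lookup (Xexp m c) w = (case w of X l \<Rightarrow> if l \<in> {1..m} then c l else 0 | _ \<Rightarrow> 0)"
  unfolding Xexp_def by (simp only: lookup_sumX finite_atLeastAtMost)

lemma Gamma1_sub: "Gamma1 m a b \<subseteq> (reesL m a b :: 'k::field mpoly set)"
proof
  fix g :: "'k mpoly" assume "g \<in> Gamma1 m a b"
  then obtain c where c: "g = Pbin m a b (Poly_Mapping.single (X (m+1)) (\<Sum>i=1..m. c i)) (Xexp m c)"
    unfolding Gamma1_def by blast
  have k: "Poly_Mapping.keys (Xexp m c) \<subseteq> X ` {1..m+1}"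
    by (auto simp: in_keys_iff lookup_Xexp split: var.splits if_splits)
  have "(\<Sum>k=1..m+1. Poly_Mapping.lookup (Xexp m c) (X k)) = (\<Sum>k=1..m. Poly_Mapping.lookup (Xexp m c) (X k))"
    by (simp add: lookup_Xexp)
  also have "\<dots> = (\<Sum>k=1..m. c k)" by (rule sum.cong) (auto simp: lookup_Xexp)
  finally have d: "(\<Sum>k=1..m+1. Poly_Mapping.lookup (Xexp m c) (X k)) = (\<Sum>k=1..m. c k)" .
  have k1: "Poly_Mapping.keys (Poly_Mapping.single (X (m+1)) (\<Sum>i=1..m. c i)) \<subseteq> X ` {1..m+1}" by auto
  have d1: "(\<Sum>k=1..m+1. Poly_Mapping.lookup (Poly_Mapping.single (X (m+1)) (\<Sum>i=1..m. c i)) (X k)) = (\<Sum>i=1..m. c i)"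
    by (intro deg_single) auto
  show "g \<in> reesL m a b" unfolding c
    by (rule Pbin_in_L[OF k1 k trans[OF d1 d[symmetric]]])
qed



lemma core_X:
  fixes t u :: monom
  assumes kt: "Poly_Mapping.keys t \<subseteq> Svars m" and ku: "Poly_Mapping.keys u \<subseteq> Svars m"
    and hT: "\<And>l. 1 \<le> l \<Longrightarrow> l \<le> m \<Longrightarrow> Poly_Mapping.lookup t (T l) + a l * Poly_Mapping.lookup t (X l) + b l * Poly_Mapping.lookup t (X (m+1))
        = Poly_Mapping.lookup u (T l) + a l * Poly_Mapping.lookup u (X l) + b l * Poly_Mapping.lookup u (X (m+1))"
    and hZ: "(\<Sum>j=1..m+1. Poly_Mapping.lookup t (X j)) = (\<Sum>j=1..m+1. Poly_Mapping.lookup u (X j))"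
    and i: "1 \<le> i" "i \<le> m"
    and lt: "Poly_Mapping.lookup t (X i) < Poly_Mapping.lookup u (X i)"
    and above: "\<And>k. k > i \<Longrightarrow> Poly_Mapping.lookup t (X k) = Poly_Mapping.lookup u (X k)"
  shows "\<exists>g\<in>Gamma0 m a b. g \<noteq> (0::'k::field mpoly) \<and> mon_dvd (lead_mon g) u"
proof -
  have "\<exists>j\<in>{1..<i}. Poly_Mapping.lookup u (X j) < Poly_Mapping.lookup t (X j)"
  proof (rule ccontr)
    assume "\<not> ?thesis"
    then have le: "\<forall>j\<in>{1..<i}. Poly_Mapping.lookup t (X j) \<le> Poly_Mapping.lookup u (X j)" by auto
    have "(\<Sum>j=1..m+1. Poly_Mapping.lookup t (X j)) < (\<Sum>j=1..m+1. Poly_Mapping.lookup u (X j))"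
    proof (rule sum_strict_mono_ex1)
      show "\<forall>x\<in>{1..m+1}. Poly_Mapping.lookup t (X x) \<le> Poly_Mapping.lookup u (X x)"
      proof
        fix x assume x: "x \<in> {1..m+1}"
        show "Poly_Mapping.lookup t (X x) \<le> Poly_Mapping.lookup u (X x)"
        proof (cases "x < i")
          case True then show ?thesis using le x by auto
        next
          case False
          then show ?thesis using lt above[of x] by (cases "x = i") auto
        qed
      qed
      show "\<exists>x\<in>{1..m+1}. Poly_Mapping.lookup t (X x) < Poly_Mapping.lookup u (X x)"
        using lt i by (intro bexI[of _ i]) auto
    qed simp
    then show False using hZ by simp
  qed
  then obtain j where j: "1 \<le> j" "j < i" "Poly_Mapping.lookup u (X j) < Poly_Mapping.lookup t (X j)" by auto
  have W: "Poly_Mapping.lookup t (X (m+1)) = Poly_Mapping.lookup u (X (m+1))" using above i by simp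
  have e: "Poly_Mapping.lookup t (T j) + a j * Poly_Mapping.lookup t (X j) = Poly_Mapping.lookup u (T j) + a j * Poly_Mapping.lookup u (X j)"
    using hT[of j] j i W by simp
  have "a j * (Poly_Mapping.lookup u (X j) + 1) \<le> a j * Poly_Mapping.lookup t (X j)"
    using j(3) by (intro mult_le_mono2) simp
  then have uTj: "a j \<le> Poly_Mapping.lookup u (T j)" using e by (simp add: algebra_simps)
  define g :: "'k mpoly" where "g = Pbin m a b (Poly_Mapping.single (X i) 1) (Poly_Mapping.single (X j) 1)"
  have gG: "g \<in> Gamma0 m a b" unfolding g_def Gamma0_def mem_Collect_eq using i j by (intro exI[of _ i] exI[of _ j]) auto
  define x where "x = quot_exp m (psi_exp m a b (Poly_Mapping.single (X j) 1)) (psi_exp m a b (Poly_Mapping.single (X i) 1)) + Poly_Mapping.single (X i) 1"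
  define y where "y = quot_exp m (psi_exp m a b (Poly_Mapping.single (X i) 1)) (psi_exp m a b (Poly_Mapping.single (X j) 1)) + Poly_Mapping.single (X j) 1"
  have g: "g = Poly_Mapping.single x 1 - Poly_Mapping.single y 1" unfolding g_def x_def y_def by (rule Pbin_eq)
  have xX: "Poly_Mapping.lookup x (X k) = (if k = i then 1 else 0)" for k
    by (simp add: x_def lookup_add lookup_quot lookup_single when_def)
  have yX: "Poly_Mapping.lookup y (X k) = (if k = j then 1 else 0)" for k
    by (simp add: y_def lookup_add lookup_quot lookup_single when_def)
  have xy: "x \<noteq> y" using xX[of i] yX[of i] j by auto
  have lxy: "lex_less y x" unfolding lex_less_def
  proof (intro exI[of _ "X i"] conjI allI impI)
    show "Poly_Mapping.lookup y (X i) < Poly_Mapping.lookup x (X i)" using xX yX j by simp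
  next
    fix w assume "var_gt w (X i)"
    then obtain k where "w = X k" "k > i" by (cases w) auto
    then show "Poly_Mapping.lookup y w = Poly_Mapping.lookup x w" using xX yX j by simp
  qed
  have "mon_dvd x u" unfolding mon_dvd_def
  proof
    fix w show "Poly_Mapping.lookup x w \<le> Poly_Mapping.lookup u w"
    proof (cases w)
      case (T l)
      show ?thesis
      proof (cases "l = j")
        case True
        then show ?thesis using T uTj j i
          by (simp add: x_def lookup_add lookup_quot lookup_psi lookup_single when_def)
      next
        case False
        then show ?thesis using T j i
          by (simp add: x_def lookup_add lookup_quot lookup_psi lookup_single when_def)
      qed
    next
      case (X k)
      then show ?thesis using xX lt by auto
    next
      case Z
      then show ?thesis by (simp add: x_def lookup_add lookup_quot lookup_single when_def)
    qed
  qed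
  then show ?thesis using gG binom_lead[OF xy lxy, where 'k='k] g by metis
qed

lemma core_W:
  fixes t u :: monom
  assumes hT: "\<And>l. 1 \<le> l \<Longrightarrow> l \<le> m \<Longrightarrow> Poly_Mapping.lookup t (T l) + a l * Poly_Mapping.lookup t (X l) + b l * Poly_Mapping.lookup t (X (m+1))
        = Poly_Mapping.lookup u (T l) + a l * Poly_Mapping.lookup u (X l) + b l * Poly_Mapping.lookup u (X (m+1))"
    and hZ: "(\<Sum>j=1..m+1. Poly_Mapping.lookup t (X j)) = (\<Sum>j=1..m+1. Poly_Mapping.lookup u (X j))"
    and lt: "Poly_Mapping.lookup t (X (m+1)) < Poly_Mapping.lookup u (X (m+1))"
  shows "\<exists>g\<in>Gamma1 m a b. g \<noteq> (0::'k::field mpoly) \<and> mon_dvd (lead_mon g) u"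
proof -
  define \<delta> where "\<delta> = Poly_Mapping.lookup u (X (m+1)) - Poly_Mapping.lookup t (X (m+1))"
  have d0: "\<delta> > 0" using lt by (simp add: \<delta>_def)
  define e where "e j = Poly_Mapping.lookup t (X j) - Poly_Mapping.lookup u (X j)" for j
  have sZ: "(\<Sum>j=1..m. Poly_Mapping.lookup t (X j)) = (\<Sum>j=1..m. Poly_Mapping.lookup u (X j)) + \<delta>"
    using hZ lt by (simp add: \<delta>_def)
  have "(\<Sum>j=1..m. Poly_Mapping.lookup t (X j)) \<le> (\<Sum>j=1..m. Poly_Mapping.lookup u (X j) + e j)"
    by (rule sum_mono) (simp add: e_def)
  then have "\<delta> \<le> (\<Sum>j=1..m. e j)" using sZ by (simp add: sum.distrib)
  then obtain c where c: "\<forall>j. c j \<le> e j" "(\<Sum>j=1..m. c j) = \<delta>" using split_sum by blast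
  have cnz: "\<exists>i\<in>{1..m}. c i \<noteq> 0"
  proof (rule ccontr)
    assume "\<not> ?thesis"
    then have "(\<Sum>j=1..m. c j) = 0" by simp
    then show False using c(2) d0 by simp
  qed
  define M where "M = Poly_Mapping.single (X (m+1)) \<delta>"
  define g :: "'k mpoly" where "g = Pbin m a b M (Xexp m c)"
  have gG: "g \<in> Gamma1 m a b" unfolding g_def Gamma1_def mem_Collect_eq M_def c(2)[symmetric]
    using cnz by (intro exI[of _ c]) auto
  define x where "x = quot_exp m (psi_exp m a b (Xexp m c)) (psi_exp m a b M) + M"
  define y where "y = quot_exp m (psi_exp m a b M) (psi_exp m a b (Xexp m c)) + Xexp m c"
  have g: "g = Poly_Mapping.single x 1 - Poly_Mapping.single y 1" unfolding g_def x_def y_def by (rule Pbin_eq)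
  have xX: "Poly_Mapping.lookup x (X k) = (if k = m+1 then \<delta> else 0)" for k
    by (simp add: x_def M_def lookup_add lookup_quot lookup_single when_def)
  have yW: "Poly_Mapping.lookup y (X k) = 0" if "k \<ge> m+1" for k
    using that by (simp add: y_def lookup_add lookup_quot lookup_Xexp)
  have xy: "x \<noteq> y" using xX[of "m+1"] yW[of "m+1"] d0 by auto
  have lxy: "lex_less y x" unfolding lex_less_def
  proof (intro exI[of _ "X (m+1)"] conjI allI impI)
    show "Poly_Mapping.lookup y (X (m+1)) < Poly_Mapping.lookup x (X (m+1))" using xX yW d0 by simp
  next
    fix w assume "var_gt w (X (m+1))"
    then obtain k where "w = X k" "k > m+1" by (cases w) auto
    then show "Poly_Mapping.lookup y w = Poly_Mapping.lookup x w" using xX yW by simp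
  qed
  have "mon_dvd x u" unfolding mon_dvd_def
  proof
    fix w show "Poly_Mapping.lookup x w \<le> Poly_Mapping.lookup u w"
    proof (cases w)
      case (T l)
      show ?thesis
      proof (cases "1 \<le> l \<and> l \<le> m")
        case True
        have xT: "Poly_Mapping.lookup x w = a l * c l - b l * \<delta>"
          using T True by (simp add: x_def M_def lookup_add lookup_quot lookup_psi lookup_Xexp lookup_single when_def)
        have uW: "Poly_Mapping.lookup u (X (m+1)) = Poly_Mapping.lookup t (X (m+1)) + \<delta>"
          using lt by (simp add: \<delta>_def)
        have eq: "Poly_Mapping.lookup t (T l) + a l * Poly_Mapping.lookup t (X l) = Poly_Mapping.lookup u (T l) + a l * Poly_Mapping.lookup u (X l) + b l * \<delta>"
          using hT[of l] True uW by (simp add: algebra_simps)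
        show ?thesis
        proof (cases "c l = 0")
          case True then show ?thesis using xT by simp
        next
          case False
          then have "Poly_Mapping.lookup u (X l) + c l \<le> Poly_Mapping.lookup t (X l)"
            using c(1)[rule_format, of l] by (simp add: e_def)
          then have "a l * (Poly_Mapping.lookup u (X l) + c l) \<le> a l * Poly_Mapping.lookup t (X l)"
            by (rule mult_le_mono2)
          then have "a l * c l \<le> Poly_Mapping.lookup u (T l) + b l * \<delta>"
            using eq by (simp add: algebra_simps)
          then show ?thesis using xT T by simp
        qed
      next
        case False
        then show ?thesis using T by (auto simp: x_def M_def lookup_add lookup_quot lookup_single when_def)
      qed
    next
      case (X k)
      then show ?thesis using xX by (auto simp: \<delta>_def)
    next
      case Z
      then show ?thesis by (simp add: x_def M_def lookup_add lookup_quot lookup_single when_def)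
    qed
  qed
  then show ?thesis using gG binom_lead[OF xy lxy, where 'k='k] g by metis
qed



lemma core:
  fixes t u :: monom
  assumes kt: "Poly_Mapping.keys t \<subseteq> Svars m" and ku: "Poly_Mapping.keys u \<subseteq> Svars m"
    and ph: "phi m a b t = phi m a b u" and lt: "lex_less t u"
  shows "\<exists>g\<in>Gamma0 m a b \<union> Gamma1 m a b. g \<noteq> (0::'k::field mpoly) \<and> mon_dvd (lead_mon g) u"
proof -
  have hT: "Poly_Mapping.lookup t (T l) + a l * Poly_Mapping.lookup t (X l) + b l * Poly_Mapping.lookup t (X (m+1))
        = Poly_Mapping.lookup u (T l) + a l * Poly_Mapping.lookup u (X l) + b l * Poly_Mapping.lookup u (X (m+1))"
    if "1 \<le> l" "l \<le> m" for l
    using phi_T[OF kt that, of a b] phi_T[OF ku that, of a b] ph by simp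
  have hZ: "(\<Sum>j=1..m+1. Poly_Mapping.lookup t (X j)) = (\<Sum>j=1..m+1. Poly_Mapping.lookup u (X j))"
    using phi_Z[OF kt, of a b] phi_Z[OF ku, of a b] ph by simp
  obtain v where v: "Poly_Mapping.lookup t v < Poly_Mapping.lookup u v"
    "\<forall>w. var_gt w v \<longrightarrow> Poly_Mapping.lookup t w = Poly_Mapping.lookup u w"
    using lt unfolding lex_less_def by blast
  have "v \<in> Poly_Mapping.keys u" using v(1) by (simp add: in_keys_iff)
  then have "v \<in> Svars m" using ku by blast
  then consider (TT) i where "v = T i" "1 \<le> i" "i \<le> m" | (XX) i where "v = X i" "1 \<le> i" "i \<le> m"
     | (WW) "v = X (m+1)"
  proof -
    assume h1: "\<And>i. v = T i \<Longrightarrow> 1 \<le> i \<Longrightarrow> i \<le> m \<Longrightarrow> thesis"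
      and h2: "\<And>i. v = X i \<Longrightarrow> 1 \<le> i \<Longrightarrow> i \<le> m \<Longrightarrow> thesis"
      and h3: "v = X (m+1) \<Longrightarrow> thesis"
    from \<open>v \<in> Svars m\<close> obtain i where "(v = T i \<and> 1 \<le> i \<and> i \<le> m) \<or> (v = X i \<and> 1 \<le> i \<and> i \<le> m + 1)"
      unfolding Svars_def by blast
    then show thesis
    proof
      assume "v = T i \<and> 1 \<le> i \<and> i \<le> m" then show thesis using h1 by blast
    next
      assume a: "v = X i \<and> 1 \<le> i \<and> i \<le> m + 1"
      show thesis
      proof (cases "i = m + 1")
        case True then show thesis using a h3 by blast
      next
        case False then show thesis using a h2[of i] by simp
      qed
    qed
  qed
  then show ?thesis
  proof cases
    case TT
    have "Poly_Mapping.lookup t (X k) = Poly_Mapping.lookup u (X k)" for k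
      using v(2) TT by simp
    then have "Poly_Mapping.lookup t (T i) = Poly_Mapping.lookup u (T i)"
      using hT[OF TT(2,3)] by simp
    then show ?thesis using v(1) TT by simp
  next
    case XX
    have "\<exists>g\<in>Gamma0 m a b. g \<noteq> (0::'k::field mpoly) \<and> mon_dvd (lead_mon g) u"
      by (rule core_X[OF kt ku hT hZ XX(2,3)]) (use v XX in auto)
    then show ?thesis by blast
  next
    case WW
    have "\<exists>g\<in>Gamma1 m a b. g \<noteq> (0::'k::field mpoly) \<and> mon_dvd (lead_mon g) u"
      by (rule core_W[OF hT hZ]) (use v WW in auto)
    then show ?thesis by blast
  qed
qed

theorem proposition2p1:
  fixes m :: nat and a b :: "nat \<Rightarrow> nat"
  assumes "m \<ge> 3"
    and "\<forall>i\<in>{1..m}. b i < a i"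
    and "card {i\<in>{1..m}. b i \<noteq> 0} \<ge> 2"
  shows "is_groebner_basis (Gamma0 m a b \<union> Gamma1 m a b) (reesL m a b :: 'k::field mpoly set)"
  unfolding is_groebner_basis_def
proof (intro conjI ballI impI)
  show "Gamma0 m a b \<union> Gamma1 m a b \<subseteq> (reesL m a b :: 'k::field mpoly set)"
    using Gamma0_sub Gamma1_sub by blast
next
  fix f :: "'k mpoly" assume fL: "f \<in> reesL m a b" and f0: "f \<noteq> 0"
  have inS: "in_S m f" and Pf: "Phi m a b f = 0" using fL unfolding reesL_def by auto
  have "Poly_Mapping.keys f \<noteq> {}" using f0 by simp
  then obtain u where u: "u \<in> Poly_Mapping.keys f" "\<forall>s\<in>Poly_Mapping.keys f. s \<noteq> u \<longrightarrow> lex_less s u"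
    using lex_max[of "Poly_Mapping.keys f"] by auto
  have lu: "lead_mon f = u" by (rule lead_monI[OF u])
  have "\<exists>t\<in>Poly_Mapping.keys f. t \<noteq> u \<and> phi m a b t = phi m a b u"
  proof (rule ccontr)
    assume nt: "\<not> ?thesis"
    have "Poly_Mapping.lookup (Phi m a b f) (phi m a b u)
        = (\<Sum>mu\<in>Poly_Mapping.keys f. Poly_Mapping.lookup (Poly_Mapping.single (phi m a b mu) (Poly_Mapping.lookup f mu)) (phi m a b u))"
      by (simp add: Phi_eq lookup_sum)
    also have "\<dots> = Poly_Mapping.lookup (Poly_Mapping.single (phi m a b u) (Poly_Mapping.lookup f u)) (phi m a b u)
       + (\<Sum>mu\<in>Poly_Mapping.keys f - {u}. Poly_Mapping.lookup (Poly_Mapping.single (phi m a b mu) (Poly_Mapping.lookup f mu)) (phi m a b u))"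
      using u(1) by (simp add: sum.remove)
    also have "(\<Sum>mu\<in>Poly_Mapping.keys f - {u}. Poly_Mapping.lookup (Poly_Mapping.single (phi m a b mu) (Poly_Mapping.lookup f mu)) (phi m a b u)) = 0"
      by (rule sum.neutral) (use nt in \<open>auto simp: lookup_single when_def\<close>)
    finally have "Poly_Mapping.lookup (Phi m a b f) (phi m a b u) = Poly_Mapping.lookup f u" by simp
    then show False using Pf u(1) by (simp add: in_keys_iff)
  qed
  then obtain t where t: "t \<in> Poly_Mapping.keys f" "t \<noteq> u" "phi m a b t = phi m a b u" by blast
  have ltu: "lex_less t u" using u(2) t(1,2) by blast
  have kt: "Poly_Mapping.keys t \<subseteq> Svars m" using inS t(1) unfolding in_S_def by blast
  have ku: "Poly_Mapping.keys u \<subseteq> Svars m" using inS u(1) unfolding in_S_def by blast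
  show "\<exists>g\<in>Gamma0 m a b \<union> Gamma1 m a b. g \<noteq> (0::'k mpoly) \<and> mon_dvd (lead_mon g) (lead_mon f)"
    using core[OF kt ku t(3) ltu] by (simp only: lu)
qed

end
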